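(* Let $n$ be even and $S\ge2$. Any deterministic AMPC algorithm with I/O capacity $S$ that computes $\mathrm{1v2Cycle}$ on $n$ vertices requires at least $\frac13\log_S n-\frac13\log_S 32=\Omega(\log_S n)$ rounds. In particular, if $S=n^{\epsilon}$ for $\epsilon\in(0,1)$, any such algorithm requires $\Omega(1/\epsilon)$ rounds.
   Context: Graphs on vertex set $\{1,\dots,n\}$ are encoded as $x\in\{0,1\}^N$, $N=\binom n2$, one bit per unordered pair (adjacency matrix). $\mathrm{1v2Cycle}:\Delta\to\{0,1\}$ is defined on the set $\Delta$ of graphs that are either a single $n$-cycle (value $1$) or a disjoint union of two cycles of length $n/2$ (value $0$). AMPC model with I/O capacity $S$: computation proceeds in rounds communicating through distributed data stores (DDS) $\mathcal{D}_0,\dots,\mathcal{D}_R$, each storing under each key a multiset of values (possibly empty; duplicates allowed, each value written by a unique machine). On input $x$, $\mathcal{D}_0$ consists of the pairs $(i,x_i)$, $i=1,\dots,N$. In round $r\ge1$ each machine (arbitrarily many, computationally unbounded, deterministic) adaptively queries keys of $\mathcal{D}_{r-1}$, receiving the whole multiset under the key, with later queries depending arbitrarily on earlier ones and their responses; the total number of values in responses plus the number of empty-response queries is at most $S$; it then writes at most $S$ key-value pairs to $\mathcal{D}_r$ as a function of its queries and responses. The algorithm is also run on invalid inputs $x\in\{0,1\}^N\setminus\Delta$ (a machine exceeding its budget stops and writes nothing), and in every round, on every input in $\{0,1\}^N$, at most $S$ values are written under any single key. The algorithm computes $g$ in $R$ rounds if for every $x\in\Delta$, $\mathcal{D}_R$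 contains exactly the single pair $(\textsc{answer},g(x))$. *)

theory Defs
  imports Main "HOL-Library.Multiset" Complex_Main
begin

text \<open>Unordered pairs {i,j}, 1 <= i < j <= n, are numbered 1..N (N = n choose 2) in
  row-major order of the upper triangle of the adjacency matrix:
  (1,2),(1,3),...,(1,n),(2,3),...,(n-1,n).\<close>

definition pair_idx :: "nat \<Rightarrow> nat \<Rightarrow> nat \<Rightarrow> nat" where
  "pair_idx n i j = (\<Sum>a\<in>{1..<i}. n - a) + (j - i)"

text \<open>An input is a bit string x in {0,1}^N, modelled as x :: nat => bool
  of which only the bits x 1, ..., x N are used.\<close>

definition edge :: "nat \<Rightarrow> (nat \<Rightarrow> bool) \<Rightarrow> nat \<Rightarrow> nat \<Rightarrow> bool" where
  "edge n x u v \<longleftrightarrow> u \<noteq> v \<and> x (pair_idx n (min u v) (max u v))"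

definition cyc_adj :: "nat \<Rightarrow> (nat \<Rightarrow> nat) \<Rightarrow> nat \<Rightarrow> nat \<Rightarrow> bool" where
  "cyc_adj L \<sigma> u v \<longleftrightarrow>
     (\<exists>i<L. (u = \<sigma> i \<and> v = \<sigma> ((i + 1) mod L)) \<or> (v = \<sigma> i \<and> u = \<sigma> ((i + 1) mod L)))"

definition one_cycle :: "nat \<Rightarrow> (nat \<Rightarrow> bool) \<Rightarrow> bool" where
  "one_cycle n x \<longleftrightarrow> n \<ge> 3 \<and>
     (\<exists>\<sigma>. bij_betw \<sigma> {..<n} {1..n} \<and>
        (\<forall>u\<in>{1..n}. \<forall>v\<in>{1..n}. edge n x u v \<longleftrightarrow> cyc_adj n \<sigma> u v))"

definition two_cycles :: "nat \<Rightarrow> (nat \<Rightarrow> bool) \<Rightarrow> bool" where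
  "two_cycles n x \<longleftrightarrow> even n \<and> n div 2 \<ge> 3 \<and>
     (\<exists>\<sigma>. bij_betw \<sigma> {..<n} {1..n} \<and>
        (\<forall>u\<in>{1..n}. \<forall>v\<in>{1..n}. edge n x u v \<longleftrightarrow>
            (cyc_adj (n div 2) \<sigma> u v \<or> cyc_adj (n div 2) (\<lambda>i. \<sigma> (n div 2 + i)) u v)))"

text \<open>The promise set Delta and the function 1v2Cycle (True = 1, False = 0).\<close>
definition Delta :: "nat \<Rightarrow> (nat \<Rightarrow> bool) \<Rightarrow> bool" where
  "Delta n x \<longleftrightarrow> one_cycle n x \<or> two_cycles n x"

definition one_v_two_cycle :: "nat \<Rightarrow> (nat \<Rightarrow> bool) \<Rightarrow> bool" where
  "one_v_two_cycle n x = one_cycle n x"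

datatype 'k dkey = InKey nat | Answer | Key 'k
datatype 'w dval = Bit bool | Val 'w

type_synonym ('k, 'w) dds = "'k dkey \<Rightarrow> 'w dval multiset"
type_synonym ('k, 'w) hist = "('k dkey \<times> 'w dval multiset) list"

datatype ('k, 'w) action = Query "'k dkey" | Write "('k dkey \<times> 'w dval) list"

text \<open>A deterministic adaptive machine: its next action is a function of the
  queries made so far and their responses.\<close>
type_synonym ('k, 'w) strategy = "('k, 'w) hist \<Rightarrow> ('k, 'w) action"

definition hist_cost :: "('k, 'w) hist \<Rightarrow> nat" where
  "hist_cost h = sum_list (map (\<lambda>(k, M). if M = {#} then 1 else size M) h)"

text \<open>Running a machine with I/O capacity S (fuel bounds the number of queries;
  since each query costs at least 1, fuel S+1 is never exhausted). A machine
  exceeding its budget stops and writes nothing.\<close>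
fun run_machine :: "nat \<Rightarrow> nat \<Rightarrow> ('k, 'w) strategy \<Rightarrow> ('k, 'w) dds \<Rightarrow> ('k, 'w) hist
    \<Rightarrow> ('k dkey \<times> 'w dval) list" where
  "run_machine S 0 P D h = []"
| "run_machine S (Suc f) P D h =
     (case P h of
        Write ws \<Rightarrow> ws
      | Query k \<Rightarrow> (let h' = h @ [(k, D k)] in
                     if hist_cost h' > S then [] else run_machine S f P D h'))"

definition machine_output :: "nat \<Rightarrow> ('k, 'w) strategy \<Rightarrow> ('k, 'w) dds \<Rightarrow> ('k dkey \<times> 'w dval) list" where
  "machine_output S P D = run_machine S (Suc S) P D []"

definition round_dds :: "nat \<Rightarrow> ('m::finite \<Rightarrow> ('k, 'w) strategy) \<Rightarrow> ('k, 'w) dds \<Rightarrow> ('k, 'w) dds" where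
  "round_dds S M D = (\<lambda>k. \<Sum>m\<in>UNIV. mset (map snd (filter (\<lambda>p. fst p = k) (machine_output S (M m) D))))"

definition input_dds :: "nat \<Rightarrow> (nat \<Rightarrow> bool) \<Rightarrow> ('k, 'w) dds" where
  "input_dds n x = (\<lambda>k. case k of
      InKey i \<Rightarrow> (if 1 \<le> i \<and> i \<le> n choose 2 then {#Bit (x i)#} else {#})
    | _ \<Rightarrow> {#})"

text \<open>An algorithm A assigns to each round r >= 1 the programs of its machines.
  dds_at S n A x r is D_r on input x.\<close>
fun dds_at :: "nat \<Rightarrow> nat \<Rightarrow> (nat \<Rightarrow> 'm::finite \<Rightarrow> ('k, 'w) strategy) \<Rightarrow> (nat \<Rightarrow> bool)
    \<Rightarrow> nat \<Rightarrow> ('k, 'w) dds" where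
  "dds_at S n A x 0 = input_dds n x"
| "dds_at S n A x (Suc r) = round_dds S (A (Suc r)) (dds_at S n A x r)"

definition ampc_valid :: "nat \<Rightarrow> nat \<Rightarrow> (nat \<Rightarrow> 'm::finite \<Rightarrow> ('k, 'w) strategy) \<Rightarrow> nat \<Rightarrow> bool" where
  "ampc_valid S n A R \<longleftrightarrow>
     (\<forall>r m h ws. 1 \<le> r \<and> r \<le> R \<and> A r m h = Write ws \<longrightarrow> length ws \<le> S) \<and>
     (\<forall>x r k. 1 \<le> r \<and> r \<le> R \<longrightarrow> size (dds_at S n A x r k) \<le> S)"

definition ampc_computes :: "nat \<Rightarrow> nat \<Rightarrow> (nat \<Rightarrow> 'm::finite \<Rightarrow> ('k, 'w) strategy) \<Rightarrow> nat
    \<Rightarrow> ((nat \<Rightarrow> bool) \<Rightarrow> bool) \<Rightarrow> ((nat \<Rightarrow> bool) \<Rightarrow> bool) \<Rightarrow> bool" where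
  "ampc_computes S n A R Dom g \<longleftrightarrow>
     (\<forall>x. Dom x \<longrightarrow> dds_at S n A x R = (\<lambda>k. if k = Answer then {#Bit (g x)#} else {#}))"

end

theory Submission
  imports Defs
begin


definition cube :: "nat \<Rightarrow> (nat \<Rightarrow> bool) set" where
  "cube L = {y. \<forall>i. L \<le> i \<longrightarrow> \<not> y i}"

definition monom_b :: "nat set \<Rightarrow> (nat \<Rightarrow> bool) \<Rightarrow> real" where
  "monom_b U y = (if (\<forall>i\<in>U. y i) then 1 else 0)"

definition ind :: "bool \<Rightarrow> real" where "ind b = (if b then 1 else 0)"

definition deg_le :: "nat \<Rightarrow> nat \<Rightarrow> ((nat \<Rightarrow> bool) \<Rightarrow> real) \<Rightarrow> bool" where
  "deg_le L d g \<longleftrightarrow> (\<exists>a. \<forall>y\<in>cube L. g y = (\<Sum>U\<in>{U. U \<subseteq> {..<L} \<and> card U \<le> d}. a U * monom_b U y))"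

lemma finite_idx: "finite {U. U \<subseteq> {..<L::nat} \<and> card U \<le> d}"
  by (rule finite_subset[of _ "Pow {..<L}"]) auto

lemma cube_eq: "cube L = (\<lambda>T i. i \<in> T) ` Pow {..<L}"
proof
  show "cube L \<subseteq> (\<lambda>T i. i \<in> T) ` Pow {..<L}"
  proof
    fix y assume "y \<in> cube L"
    then have "y = (\<lambda>i. i \<in> {i. i < L \<and> y i})" unfolding cube_def
      by (auto simp: fun_eq_iff) (meson not_le)
    then show "y \<in> (\<lambda>T i. i \<in> T) ` Pow {..<L}" by blast
  qed
qed (auto simp: cube_def)

lemma finite_cube: "finite (cube L)"
  unfolding cube_eq by simp

lemma deg_le_mono: "deg_le L d g \<Longrightarrow> d \<le> d' \<Longrightarrow> deg_le L d' g"
proof -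
  assume "deg_le L d g" "d \<le> d'"
  then obtain a where a: "\<forall>y\<in>cube L. g y = (\<Sum>U\<in>{U. U \<subseteq> {..<L} \<and> card U \<le> d}. a U * monom_b U y)"
    unfolding deg_le_def by blast
  define a' where "a' U = (if card U \<le> d then a U else 0)" for U
  have "\<forall>y\<in>cube L. g y = (\<Sum>U\<in>{U. U \<subseteq> {..<L} \<and> card U \<le> d'}. a' U * monom_b U y)"
  proof
    fix y assume y: "y \<in> cube L"
    have "(\<Sum>U\<in>{U. U \<subseteq> {..<L} \<and> card U \<le> d'}. a' U * monom_b U y)
        = (\<Sum>U\<in>{U. U \<subseteq> {..<L} \<and> card U \<le> d}. a' U * monom_b U y)"
      by (rule sum.mono_neutral_right) (use \<open>d \<le> d'\<close> finite_idx in \<open>auto simp: a'_def\<close>)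
    also have "\<dots> = (\<Sum>U\<in>{U. U \<subseteq> {..<L} \<and> card U \<le> d}. a U * monom_b U y)"
      by (rule sum.cong) (auto simp: a'_def)
    finally show "g y = (\<Sum>U\<in>{U. U \<subseteq> {..<L} \<and> card U \<le> d'}. a' U * monom_b U y)"
      using a y by simp
  qed
  then show ?thesis unfolding deg_le_def by blast
qed

lemma deg_le_cong: "deg_le L d f \<Longrightarrow> (\<And>y. y \<in> cube L \<Longrightarrow> f y = g y) \<Longrightarrow> deg_le L d g"
  unfolding deg_le_def by metis

lemma deg_le_const: "deg_le L d (\<lambda>_. c)"
proof -
  have "deg_le L 0 (\<lambda>_. c)"
    unfolding deg_le_def
  proof (intro exI ballI)
    fix y
    have e: "{U. U \<subseteq> {..<L} \<and> card U \<le> 0} = {{}}"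
      by (auto simp: card_eq_0_iff dest: finite_subset[OF _ finite_lessThan])
    show "c = (\<Sum>U\<in>{U. U \<subseteq> {..<L} \<and> card U \<le> 0}. (\<lambda>_. c) U * monom_b U y)"
      unfolding e by (simp add: monom_b_def)
  qed
  then show ?thesis by (rule deg_le_mono) simp
qed

lemma deg_le_add: "deg_le L d f \<Longrightarrow> deg_le L d g \<Longrightarrow> deg_le L d (\<lambda>y. f y + g y)"
proof -
  assume "deg_le L d f" "deg_le L d g"
  then obtain a b where a: "\<forall>y\<in>cube L. f y = (\<Sum>U\<in>{U. U \<subseteq> {..<L} \<and> card U \<le> d}. a U * monom_b U y)"
    and b: "\<forall>y\<in>cube L. g y = (\<Sum>U\<in>{U. U \<subseteq> {..<L} \<and> card U \<le> d}. b U * monom_b U y)"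
    unfolding deg_le_def by blast
  show ?thesis unfolding deg_le_def
    by (rule exI[of _ "\<lambda>U. a U + b U"]) (simp add: a b distrib_right sum.distrib)
qed

lemma deg_le_scale: "deg_le L d f \<Longrightarrow> deg_le L d (\<lambda>y. c * f y)"
proof -
  assume "deg_le L d f"
  then obtain a where a: "\<forall>y\<in>cube L. f y = (\<Sum>U\<in>{U. U \<subseteq> {..<L} \<and> card U \<le> d}. a U * monom_b U y)"
    unfolding deg_le_def by blast
  show ?thesis unfolding deg_le_def
    by (rule exI[of _ "\<lambda>U. c * a U"]) (simp add: a sum_distrib_left mult.assoc)
qed

lemma deg_le_sum: "finite I \<Longrightarrow> (\<And>i. i \<in> I \<Longrightarrow> deg_le L d (f i)) \<Longrightarrow> deg_le L d (\<lambda>y. \<Sum>i\<in>I. f i y)"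
proof (induction I rule: finite_induct)
  case empty
  then show ?case using deg_le_const[of L d 0] by simp
next
  case (insert x F)
  then show ?case by (simp add: deg_le_add)
qed

lemma sum_ind_delta: "finite X \<Longrightarrow> (\<Sum>W\<in>X. (if W = U then 1 else 0) * f W) = (if U \<in> X then f U else (0::real))"
proof -
  assume "finite X"
  have "(\<Sum>W\<in>X. (if W = U then 1 else 0) * f W) = (\<Sum>W\<in>X. if W = U then f W else 0)"
    by (rule sum.cong) auto
  then show ?thesis using \<open>finite X\<close> by (simp add: sum.delta)
qed

lemma deg_le_monom: "U \<subseteq> {..<L} \<Longrightarrow> deg_le L (card U) (monom_b U)"
  unfolding deg_le_def
proof (intro exI ballI)
  fix y assume "U \<subseteq> {..<L}"
  then have "U \<in> {W. W \<subseteq> {..<L} \<and> card W \<le> card U}" by simp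
  then show "monom_b U y = (\<Sum>W\<in>{W. W \<subseteq> {..<L} \<and> card W \<le> card U}. (\<lambda>W. if W = U then 1 else 0) W * monom_b W y)"
    using finite_idx by (simp add: sum_ind_delta)
qed

lemma monom_b_mult: "monom_b U y * monom_b W y = monom_b (U \<union> W) y"
  by (auto simp: monom_b_def)

lemma deg_le_mult: "deg_le L d f \<Longrightarrow> deg_le L e g \<Longrightarrow> deg_le L (d + e) (\<lambda>y. f y * g y)"
proof -
  assume "deg_le L d f" "deg_le L e g"
  then obtain a b where a: "\<forall>y\<in>cube L. f y = (\<Sum>U\<in>{U. U \<subseteq> {..<L} \<and> card U \<le> d}. a U * monom_b U y)"
    and b: "\<forall>y\<in>cube L. g y = (\<Sum>U\<in>{U. U \<subseteq> {..<L} \<and> card U \<le> e}. b U * monom_b U y)"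
    unfolding deg_le_def by blast
  let ?I = "{U. U \<subseteq> {..<L} \<and> card U \<le> d}" and ?J = "{U. U \<subseteq> {..<L} \<and> card U \<le> e}"
  have "deg_le L (d + e) (\<lambda>y. \<Sum>U\<in>?I. \<Sum>W\<in>?J. (a U * b W) * monom_b (U \<union> W) y)"
  proof (intro deg_le_sum finite_idx deg_le_scale)
    fix U W assume "U \<in> ?I" "W \<in> ?J"
    then have "card (U \<union> W) \<le> d + e" "U \<union> W \<subseteq> {..<L}"
      using card_Un_le[of U W] by auto
    then show "deg_le L (d + e) (monom_b (U \<union> W))"
      using deg_le_monom deg_le_mono by blast
  qed
  then show ?thesis
  proof (rule deg_le_cong)
    fix y assume "y \<in> cube L"
    then show "(\<Sum>U\<in>?I. \<Sum>W\<in>?J. (a U * b W) * monom_b (U \<union> W) y) = f y * g y"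
      using a b by (simp add: sum_product monom_b_mult[symmetric] mult_ac)
  qed
qed

lemma deg_le_prod: "finite I \<Longrightarrow> (\<And>i. i \<in> I \<Longrightarrow> deg_le L (e i) (f i)) \<Longrightarrow>
   deg_le L (\<Sum>i\<in>I. e i) (\<lambda>y. \<Prod>i\<in>I. f i y)"
proof (induction I rule: finite_induct)
  case empty
  then show ?case using deg_le_const[of L 0 1] by simp
next
  case (insert x F)
  then show ?case by (simp add: deg_le_mult)
qed

lemma deg_le_coord:
  assumes "j < L" "\<And>y y'. y j = y' j \<Longrightarrow> f y = f y'"
  shows "deg_le L 1 f"
proof -
  let ?c0 = "f (\<lambda>_. False)" and ?c1 = "f (\<lambda>_. True)"
  have "deg_le L 1 (\<lambda>y. ?c0 + (?c1 - ?c0) * monom_b {j} y)"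
    using deg_le_monom[of "{j}" L] assms(1)
    by (intro deg_le_add deg_le_scale deg_le_const) auto
  then show ?thesis
  proof (rule deg_le_cong)
    fix y
    have "f y = f (\<lambda>_. y j)" using assms(2)[of y "\<lambda>_. y j"] by simp
    then show "?c0 + (?c1 - ?c0) * monom_b {j} y = f y"
      by (cases "y j") (auto simp: monom_b_def)
  qed
qed

lemma deg_le_fun:
  assumes "\<And>z. deg_le L e (\<lambda>y. ind (g y = z))"
  shows "deg_le L e (\<lambda>y. \<phi> (g y))"
proof -
  have "deg_le L e (\<lambda>y. \<Sum>z\<in>g ` cube L. \<phi> z * ind (g y = z))"
    using finite_cube by (intro deg_le_sum deg_le_scale assms) auto
  then show ?thesis
  proof (rule deg_le_cong)
    fix y assume "y \<in> cube L"
    then show "(\<Sum>z\<in>g ` cube L. \<phi> z * ind (g y = z)) = \<phi> (g y)"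
      using finite_cube sum_ind_delta[of "g ` cube L" "g y" \<phi>] by (simp add: ind_def eq_commute[of "g y"] mult.commute)
  qed
qed

lemma alt_sum_Pow: "finite B \<Longrightarrow> B \<noteq> {} \<Longrightarrow> (\<Sum>T\<in>Pow B. (-1::real) ^ card T) = 0"
proof -
  assume fB: "finite B" and ne: "B \<noteq> {}"
  obtain a where aB: "a \<in> B" using ne by blast
  define B' where "B' = B - {a}"
  have B: "B = insert a B'" "a \<notin> B'" "finite B'" using aB fB unfolding B'_def by auto
  have disj: "Pow B' \<inter> insert a ` Pow B' = {}" using B(2) by auto
  have "(\<Sum>T\<in>Pow B. (-1::real) ^ card T) = (\<Sum>T\<in>Pow B'. (-1::real) ^ card T) + (\<Sum>T\<in>insert a ` Pow B'. (-1::real) ^ card T)"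
    unfolding B(1) Pow_insert
    by (rule sum.union_disjoint) (simp_all add: B(3) disj)
  also have "(\<Sum>T\<in>insert a ` Pow B'. (-1::real) ^ card T) = (\<Sum>T\<in>Pow B'. (-1::real) ^ card (insert a T))"
  proof (rule sum.reindex_cong[of "insert a"])
    show "inj_on (insert a) (Pow B')"
    proof (rule inj_onI)
      fix x y assume xy: "x \<in> Pow B'" "y \<in> Pow B'" "insert a x = insert a y"
      then have "a \<notin> x" "a \<notin> y" using B(2) by auto
      then show "x = y" using xy(3) by (metis Diff_insert_absorb)
    qed
  qed simp_all
  also have "\<dots> = (\<Sum>T\<in>Pow B'. - ((-1::real) ^ card T))"
  proof (rule sum.cong)
    fix T assume T: "T \<in> Pow B'"
    then have "finite T" "a \<notin> T" using B(2,3) finite_subset by auto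
    then show "(-1::real) ^ card (insert a T) = - ((-1::real) ^ card T)" by simp
  qed simp
  also have "\<dots> = - (\<Sum>T\<in>Pow B'. (-1::real) ^ card T)" by (simp add: sum_negf)
  finally show ?thesis by simp
qed

lemma alt_sum_monom:
  assumes "U \<subseteq> {..<L}" "card U < L"
  shows "(\<Sum>T\<in>Pow {..<L}. (-1::real) ^ card T * monom_b U (\<lambda>i. i \<in> T)) = 0"
proof -
  have "U \<noteq> {..<L}" using assms by auto
  then have ne: "{..<L} - U \<noteq> {}" using assms by auto
  have fU: "finite U" using assms finite_subset by blast
  have seteq: "{T. T \<subseteq> {..<L} \<and> U \<subseteq> T} = (\<lambda>W. U \<union> W) ` Pow ({..<L} - U)"
  proof
    show "{T. T \<subseteq> {..<L} \<and> U \<subseteq> T} \<subseteq> (\<lambda>W. U \<union> W) ` Pow ({..<L} - U)"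
    proof
      fix T assume T: "T \<in> {T. T \<subseteq> {..<L} \<and> U \<subseteq> T}"
      then have "T = U \<union> (T - U)" "T - U \<in> Pow ({..<L} - U)" by auto
      then show "T \<in> (\<lambda>W. U \<union> W) ` Pow ({..<L} - U)" by (rule image_eqI)
    qed
  next
    show "(\<lambda>W. U \<union> W) ` Pow ({..<L} - U) \<subseteq> {T. T \<subseteq> {..<L} \<and> U \<subseteq> T}"
      using assms(1) by auto
  qed
  have inj: "inj_on (\<lambda>W. U \<union> W) (Pow ({..<L} - U))"
  proof (rule inj_onI)
    fix x y assume xy: "x \<in> Pow ({..<L} - U)" "y \<in> Pow ({..<L} - U)" "U \<union> x = U \<union> y"
    then have "x = (U \<union> x) - U" "y = (U \<union> y) - U" by auto
    then show "x = y" using xy(3) by simp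
  qed
  have "(\<Sum>T\<in>Pow {..<L}. (-1::real) ^ card T * monom_b U (\<lambda>i. i \<in> T))
      = (\<Sum>T\<in>{T. T \<subseteq> {..<L} \<and> U \<subseteq> T}. (-1::real) ^ card T)"
    by (rule sum.mono_neutral_cong_right) (auto simp: monom_b_def)
  also have "\<dots> = (\<Sum>W\<in>Pow ({..<L} - U). (-1::real) ^ card (U \<union> W))"
    unfolding seteq by (rule sum.reindex[OF inj, unfolded comp_def])
  also have "\<dots> = (\<Sum>W\<in>Pow ({..<L} - U). (-1::real) ^ card U * (-1) ^ card W)"
  proof (rule sum.cong)
    fix W assume "W \<in> Pow ({..<L} - U)"
    then have "card (U \<union> W) = card U + card W" using fU
      by (intro card_Un_disjoint) (auto dest: finite_subset)
    then show "(-1::real) ^ card (U \<union> W) = (-1) ^ card U * (-1) ^ card W" by (simp add: power_add)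
  qed simp
  also have "\<dots> = 0" using alt_sum_Pow[OF _ ne] by (simp add: sum_distrib_left[symmetric])
  finally show ?thesis .
qed

lemma deg_le_alt_sum:
  assumes "deg_le L d g" "d < L"
  shows "(\<Sum>T\<in>Pow {..<L}. (-1::real) ^ card T * g (\<lambda>i. i \<in> T)) = 0"
proof -
  obtain a where a: "\<forall>y\<in>cube L. g y = (\<Sum>U\<in>{U. U \<subseteq> {..<L} \<and> card U \<le> d}. a U * monom_b U y)"
    using assms unfolding deg_le_def by blast
  have "(\<Sum>T\<in>Pow {..<L}. (-1::real) ^ card T * g (\<lambda>i. i \<in> T))
     = (\<Sum>T\<in>Pow {..<L}. \<Sum>U\<in>{U. U \<subseteq> {..<L} \<and> card U \<le> d}. a U * ((-1::real) ^ card T * monom_b U (\<lambda>i. i \<in> T)))"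
  proof (rule sum.cong)
    fix T assume "T \<in> Pow {..<L}"
    then have "(\<lambda>i. i \<in> T) \<in> cube L" by (auto simp: cube_def)
    then show "(-1::real) ^ card T * g (\<lambda>i. i \<in> T) = (\<Sum>U\<in>{U. U \<subseteq> {..<L} \<and> card U \<le> d}. a U * ((-1::real) ^ card T * monom_b U (\<lambda>i. i \<in> T)))"
      using a by (simp add: sum_distrib_left mult_ac)
  qed simp
  also have "\<dots> = (\<Sum>U\<in>{U. U \<subseteq> {..<L} \<and> card U \<le> d}. a U * (\<Sum>T\<in>Pow {..<L}. (-1::real) ^ card T * monom_b U (\<lambda>i. i \<in> T)))"
    by (subst sum.swap) (simp add: sum_distrib_left)
  also have "\<dots> = 0"
    using assms(2) by (intro sum.neutral ballI) (auto simp: alt_sum_monom)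
  finally show ?thesis .
qed



lemma ind_sum_eq:
  assumes "y \<in> cube L"
  shows "(\<Sum>V\<in>(\<lambda>y. Dy y) ` cube L. ind (Dy y = V) * G V) = G (Dy y)"
proof -
  have "(\<Sum>V\<in>(\<lambda>y. Dy y) ` cube L. ind (Dy y = V) * G V) = (\<Sum>V\<in>(\<lambda>y. Dy y) ` cube L. (if V = Dy y then 1 else 0) * G V)"
    by (rule sum.cong) (auto simp: ind_def)
  also have "\<dots> = G (Dy y)" using assms finite_cube by (simp add: sum_ind_delta)
  finally show ?thesis .
qed

lemma deg_run_machine:
  assumes D: "\<And>k V. deg_le L d (\<lambda>y. ind (Dy y k = V))"
  shows "deg_le L (f * d) (\<lambda>y. ind (run_machine S f P (Dy y) h = ws))"
proof (induction f arbitrary: h)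
  case 0
  then show ?case by (simp add: deg_le_const)
next
  case (Suc f)
  show ?case
  proof (cases "P h")
    case (Write ws')
    then show ?thesis by (simp add: deg_le_const)
  next
    case (Query k)
    define G where "G V y = ind (if S < hist_cost (h @ [(k, V)]) then [] = ws
        else run_machine S f P (Dy y) (h @ [(k, V)]) = ws)" for V y
    have G: "deg_le L (f * d) (G V)" for V
      unfolding G_def by (cases "S < hist_cost (h @ [(k, V)])") (simp_all add: deg_le_const Suc.IH)
    have "deg_le L (d + f * d) (\<lambda>y. \<Sum>V\<in>(\<lambda>y. Dy y k) ` cube L. ind (Dy y k = V) * G V y)"
      using finite_cube by (intro deg_le_sum deg_le_mult D G) auto
    moreover have "\<forall>y\<in>cube L. (\<Sum>V\<in>(\<lambda>y. Dy y k) ` cube L. ind (Dy y k = V) * G V y) = ind (run_machine S (Suc f) P (Dy y) h = ws)"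
    proof
      fix y assume y: "y \<in> cube L"
      have "(\<Sum>V\<in>(\<lambda>y. Dy y k) ` cube L. ind (Dy y k = V) * G V y) = G (Dy y k) y"
        using ind_sum_eq[OF y, of "\<lambda>y. Dy y k" "\<lambda>V. G V y"] by simp
      then show "(\<Sum>V\<in>(\<lambda>y. Dy y k) ` cube L. ind (Dy y k = V) * G V y) = ind (run_machine S (Suc f) P (Dy y) h = ws)"
        using Query by (simp add: G_def Let_def)
    qed
    ultimately show ?thesis using deg_le_cong by (simp add: deg_le_cong)
  qed
qed

lemma deg_machine_output:
  assumes D: "\<And>k V. deg_le L d (\<lambda>y. ind (Dy y k = V))"
  shows "deg_le L ((S + 1) * d) (\<lambda>y. ind (machine_output S P (Dy y) = ws))"
  unfolding machine_output_def using deg_run_machine[OF D, of "Suc S"] by simp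

lemma size_eq_sum_count: "size (V :: 'a multiset) = (\<Sum>v\<in>set_mset V. count V v)"
  by (simp add: size_multiset_overloaded_eq)

lemma ind_mset_formula:
  fixes D V :: "'a multiset"
  assumes "size D \<le> S" "size V \<le> S"
  shows "ind (D = V) = (\<Prod>j\<in>{size V<..S}. (real (size D) - real j) / (real (size V) - real j)) *
     (\<Prod>v\<in>set_mset V. \<Prod>i<count V v. (real (count D v) - real i) / (real (count V v) - real i))"
proof (cases "D = V")
  case True
  have "(\<Prod>j\<in>{size V<..S}. (real (size V) - real j) / (real (size V) - real j)) = 1"
    by (rule prod.neutral) auto
  moreover have "(\<Prod>v\<in>set_mset V. \<Prod>i<count V v. (real (count V v) - real i) / (real (count V v) - real i)) = 1"
    by (intro prod.neutral ballI) auto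
  ultimately show ?thesis using True by (simp add: ind_def)
next
  case False
  show ?thesis
  proof (cases "size D > size V")
    case True
    then have "(\<Prod>j\<in>{size V<..S}. (real (size D) - real j) / (real (size V) - real j)) = 0"
      using assms True by (simp add: prod_zero_iff)
    then show ?thesis using False by (simp add: ind_def)
  next
    case le: False
    have "\<exists>v\<in>set_mset V. count D v < count V v"
    proof (rule ccontr)
      assume "\<not> ?thesis"
      then have "V \<subseteq># D" by (auto simp: subseteq_mset_def not_less) (metis count_eq_zero_iff le0)
      then have "V = D" using le mset_subset_size[of V D] by (metis not_le subset_mset.le_less)
      then show False using False by simp
    qed
    then obtain v where v: "v \<in> set_mset V" "count D v < count V v" by blast
    have "(\<Prod>i<count V v. (real (count D v) - real i) / (real (count V v) - real i)) = 0"
      using v by (simp add: prod_zero_iff)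
    then have "(\<Prod>v\<in>set_mset V. \<Prod>i<count V v. (real (count D v) - real i) / (real (count V v) - real i)) = 0"
      using v by (simp add: prod_zero_iff) blast
    then show ?thesis using False by (simp add: ind_def)
  qed
qed

lemma deg_le_affine: "deg_le L e f \<Longrightarrow> deg_le L e (\<lambda>y. (f y - a) / b)"
proof -
  assume "deg_le L e f"
  then have "deg_le L e (\<lambda>y. (1 / b) * f y + (- a / b))"
    by (intro deg_le_add deg_le_scale deg_le_const)
  then show ?thesis by (rule deg_le_cong) (simp add: diff_divide_distrib)
qed

lemma deg_round:
  assumes D: "\<And>k V. deg_le L d (\<lambda>y. ind (Dy y k = V))"
    and cap: "\<And>y. y \<in> cube L \<Longrightarrow> size (round_dds S M (Dy y) k) \<le> S"
  shows "deg_le L (S * ((S + 1) * d)) (\<lambda>y. ind (round_dds S M (Dy y) k = V))"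
proof -
  define e where "e = (S + 1) * d"
  define out where "out m y = machine_output S (M m) (Dy y)" for m y
  have O: "deg_le L e (\<lambda>y. ind (out m y = ws))" for m ws
    unfolding e_def out_def by (rule deg_machine_output[OF D])
  have R: "round_dds S M (Dy y) k = (\<Sum>m\<in>UNIV. mset (map snd (filter (\<lambda>p. fst p = k) (out m y))))" for y
    by (simp add: round_dds_def out_def)
  have cnt: "deg_le L e (\<lambda>y. real (count (round_dds S M (Dy y) k) v))" for v
  proof -
    have "deg_le L e (\<lambda>y. \<Sum>m\<in>UNIV. (\<lambda>ws. real (count (mset (map snd (filter (\<lambda>p. fst p = k) ws))) v)) (out m y))"
      by (intro deg_le_sum deg_le_fun[OF O]) auto
    then show ?thesis by (rule deg_le_cong) (simp add: R count_sum)
  qed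
  have sz: "deg_le L e (\<lambda>y. real (size (round_dds S M (Dy y) k)))"
  proof -
    have "deg_le L e (\<lambda>y. \<Sum>m\<in>UNIV. (\<lambda>ws. real (size (mset (map snd (filter (\<lambda>p. fst p = k) ws))))) (out m y))"
      by (intro deg_le_sum deg_le_fun[OF O]) auto
    then show ?thesis by (rule deg_le_cong) (simp add: R)
  qed
  show ?thesis
  proof (cases "size V \<le> S")
    case False
    have "deg_le L 0 (\<lambda>y. 0)" by (rule deg_le_const)
    then have "deg_le L 0 (\<lambda>y. ind (round_dds S M (Dy y) k = V))"
      by (rule deg_le_cong) (use cap False in \<open>auto simp: ind_def\<close>)
    then show ?thesis by (rule deg_le_mono) simp
  next
    case True
    have P1: "deg_le L (\<Sum>j\<in>{size V<..S}. e) (\<lambda>y. \<Prod>j\<in>{size V<..S}. (real (size (round_dds S M (Dy y) k)) - real j) / (real (size V) - real j))"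
      by (intro deg_le_prod deg_le_affine sz) auto
    have P2: "deg_le L (\<Sum>v\<in>set_mset V. \<Sum>i<count V v. e) (\<lambda>y. \<Prod>v\<in>set_mset V. \<Prod>i<count V v. (real (count (round_dds S M (Dy y) k) v) - real i) / (real (count V v) - real i))"
      by (intro deg_le_prod deg_le_affine cnt) auto
    have s1: "(\<Sum>j\<in>{size V<..S}. e) = (S - size V) * e" by simp
    have s2: "(\<Sum>v\<in>set_mset V. \<Sum>i<count V v. e) = size V * e"
      by (simp add: size_eq_sum_count sum_distrib_right)
    have "deg_le L ((S - size V) * e + size V * e) (\<lambda>y. ind (round_dds S M (Dy y) k = V))"
      using deg_le_mult[OF P1 P2] unfolding s1 s2
    proof (rule deg_le_cong)
      fix y assume y: "y \<in> cube L"
      show "(\<Prod>j\<in>{size V<..S}. (real (size (round_dds S M (Dy y) k)) - real j) / (real (size V) - real j)) *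
         (\<Prod>v\<in>set_mset V. \<Prod>i<count V v. (real (count (round_dds S M (Dy y) k) v) - real i) / (real (count V v) - real i))
         = ind (round_dds S M (Dy y) k = V)"
        by (rule ind_mset_formula[OF cap[OF y] True, symmetric])
    qed
    moreover have "(S - size V) * e + size V * e = S * ((S + 1) * d)"
      using True by (simp add: e_def add_mult_distrib[symmetric])
    ultimately show ?thesis by simp
  qed
qed

lemma deg_dds:
  fixes A :: "nat \<Rightarrow> 'm::finite \<Rightarrow> ('k, 'w) strategy"
  assumes base: "\<And>i. \<exists>j<L. \<forall>y y'. y j = y' j \<longrightarrow> X y i = X y' i"
    and valid: "ampc_valid S n A R"
  shows "r \<le> R \<Longrightarrow> deg_le L ((S * (S + 1)) ^ r) (\<lambda>y. ind (dds_at S n A (X y) r k = V))"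
proof (induction r arbitrary: k V)
  case 0
  show ?case
  proof (cases k)
    case (InKey i)
    obtain j where j: "j < L" "\<forall>y y'. y j = y' j \<longrightarrow> X y i = X y' i" using base by blast
    have "deg_le L 1 (\<lambda>y. ind (dds_at S n A (X y) 0 k = V))"
    proof (rule deg_le_coord[OF j(1)])
      fix y y' :: "nat \<Rightarrow> bool" assume "y j = y' j"
      then have "X y i = X y' i" using j(2) by blast
      then show "ind (dds_at S n A (X y) 0 k = V) = ind (dds_at S n A (X y') 0 k = V)"
        by (simp add: InKey input_dds_def)
    qed
    then show ?thesis by simp
  next
    case Answer
    then show ?thesis by (simp add: input_dds_def deg_le_const)
  next
    case (Key x)
    then show ?thesis by (simp add: input_dds_def deg_le_const)
  qed
next
  case (Suc r)
  have IH: "deg_le L ((S * (S + 1)) ^ r) (\<lambda>y. ind (dds_at S n A (X y) r k' = V'))" for k' V'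
    using Suc by simp
  have cap: "size (round_dds S (A (Suc r)) (dds_at S n A (X y) r) k) \<le> S" for y
  proof -
    have all: "\<And>x r k. 1 \<le> r \<Longrightarrow> r \<le> R \<Longrightarrow> size (dds_at S n A x r k) \<le> S"
      using valid unfolding ampc_valid_def by blast
    have "size (dds_at S n A (X y) (Suc r) k) \<le> S"
      by (rule all) (use Suc.prems in auto)
    then show ?thesis by simp
  qed
  have "deg_le L (S * ((S + 1) * (S * (S + 1)) ^ r)) (\<lambda>y. ind (round_dds S (A (Suc r)) (dds_at S n A (X y) r) k = V))"
    by (rule deg_round[OF IH cap])
  moreover have eq: "(S * (S + 1)) ^ Suc r = S * ((S + 1) * (S * (S + 1)) ^ r)" by (simp only: power_Suc mult.assoc)
  ultimately show ?case by (simp only: dds_at.simps eq)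
qed



lemma edge_sym: "edge n x u v = edge n x v u"
  unfolding edge_def by (auto simp: min.commute max.commute)

lemma one_cycle_closed:
  assumes "one_cycle n x" "Z \<subseteq> {1..n}" "Z \<noteq> {}"
    and cl: "\<And>u v. u \<in> Z \<Longrightarrow> v \<in> {1..n} \<Longrightarrow> edge n x u v \<Longrightarrow> v \<in> Z"
  shows "{1..n} \<subseteq> Z"
proof -
  obtain \<sigma> where n3: "n \<ge> 3" and bij: "bij_betw \<sigma> {..<n} {1..n}"
    and E: "\<forall>u\<in>{1..n}. \<forall>v\<in>{1..n}. edge n x u v \<longleftrightarrow> cyc_adj n \<sigma> u v"
    using assms(1) unfolding one_cycle_def by blast
  have img: "\<sigma> ` {..<n} = {1..n}" using bij by (simp add: bij_betw_def)
  obtain z where "z \<in> Z" using assms(3) by blast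
  then obtain j where j: "j < n" "\<sigma> j \<in> Z" using assms(2) img by (metis imageE lessThan_iff subsetD)
  have step: "\<sigma> ((j + t) mod n) \<in> Z" for t
  proof (induction t)
    case 0
    then show ?case using j by simp
  next
    case (Suc t)
    let ?i = "(j + t) mod n"
    have i: "?i < n" using n3 by simp
    have mem: "\<sigma> ?i \<in> {1..n}" "\<sigma> ((?i + 1) mod n) \<in> {1..n}"
      using i img n3 by auto
    have "cyc_adj n \<sigma> (\<sigma> ?i) (\<sigma> ((?i + 1) mod n))"
      unfolding cyc_adj_def using i by blast
    then have "edge n x (\<sigma> ?i) (\<sigma> ((?i + 1) mod n))" using E mem by blast
    then have "\<sigma> ((?i + 1) mod n) \<in> Z" using cl Suc.IH mem by blast
    moreover have "(?i + 1) mod n = (j + Suc t) mod n" by (simp add: mod_Suc_eq)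
    ultimately show ?case by simp
  qed
  show ?thesis
  proof
    fix w assume "w \<in> {1..n}"
    then obtain i where i: "i < n" "w = \<sigma> i" using img by (metis imageE lessThan_iff)
    have "(j + (i + n - j)) mod n = i" using i j by simp
    then show "w \<in> Z" using step[of "i + n - j"] i by simp
  qed
qed

lemma two_not_one:
  assumes "two_cycles n x"
  shows "\<not> one_cycle n x"
proof
  assume one: "one_cycle n x"
  let ?h = "n div 2"
  obtain \<tau> where ev: "even n" and h3: "?h \<ge> 3" and bij: "bij_betw \<tau> {..<n} {1..n}"
    and E: "\<forall>u\<in>{1..n}. \<forall>v\<in>{1..n}. edge n x u v \<longleftrightarrow>
            (cyc_adj ?h \<tau> u v \<or> cyc_adj ?h (\<lambda>i. \<tau> (?h + i)) u v)"
    using assms unfolding two_cycles_def by blast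
  have n2: "n = ?h + ?h" using ev by auto
  have inj: "inj_on \<tau> {..<n}" using bij by (simp add: bij_betw_def)
  have img: "\<tau> ` {..<n} = {1..n}" using bij by (simp add: bij_betw_def)
  define Q where "Q = \<tau> ` {..<?h}"
  define Q' where "Q' = \<tau> ` {?h..<n}"
  have un: "{..<n} = {..<?h} \<union> {?h..<n}" by auto
  have QQ: "Q \<union> Q' = {1..n}" unfolding Q_def Q'_def using img un by (metis image_Un)
  have disj: "Q \<inter> Q' = {}"
  proof (rule ccontr)
    assume "Q \<inter> Q' \<noteq> {}"
    then obtain i j where ij: "i < ?h" "?h \<le> j" "j < n" "\<tau> i = \<tau> j"
      unfolding Q_def Q'_def by force
    then have "i = j" using inj_onD[OF inj ij(4)] n2 by simp
    then show False using ij by simp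
  qed
  have i1: "inj_on \<tau> {..<?h}" by (rule inj_on_subset[OF inj]) auto
  have i2: "inj_on \<tau> {?h..<n}" by (rule inj_on_subset[OF inj]) auto
  have cQ: "card Q = ?h" unfolding Q_def using card_image[OF i1] by simp
  have cQ': "card Q' = ?h" unfolding Q'_def using card_image[OF i2] n2 by simp
  have inQ: "\<tau> i \<in> Q" if "i < ?h" for i using that Q_def by auto
  have inQ': "\<tau> (?h + i) \<in> Q'" if "i < ?h" for i using that Q'_def n2 by auto
  have md: "(i + 1) mod ?h < ?h" for i using h3 by simp
  have clQ: "v \<in> Q" if "u \<in> Q" "v \<in> {1..n}" "edge n x u v" for u v
  proof -
    have u: "u \<in> {1..n}" using that QQ by auto
    have "cyc_adj ?h \<tau> u v \<or> cyc_adj ?h (\<lambda>i. \<tau> (?h + i)) u v" using E u that by blast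
    then show ?thesis
    proof
      assume "cyc_adj ?h \<tau> u v"
      then obtain i where i: "i < ?h" "v = \<tau> i \<or> v = \<tau> ((i + 1) mod ?h)"
        unfolding cyc_adj_def by blast
      then show ?thesis using inQ[of i] inQ[OF md[of i]] by blast
    next
      assume "cyc_adj ?h (\<lambda>i. \<tau> (?h + i)) u v"
      then obtain i where i: "i < ?h" "u = \<tau> (?h + i) \<or> u = \<tau> (?h + (i + 1) mod ?h)"
        unfolding cyc_adj_def by blast
      then have "u \<in> Q'" using inQ'[of i] inQ'[OF md[of i]] by blast
      then show ?thesis using disj that(1) by blast
    qed
  qed
  have clQ': "v \<in> Q'" if "u \<in> Q'" "v \<in> {1..n}" "edge n x u v" for u v
  proof (rule ccontr)
    assume "v \<notin> Q'"
    then have "v \<in> Q" using QQ that by auto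
    moreover have "u \<in> {1..n}" using that QQ by auto
    ultimately have "u \<in> Q" using clQ that edge_sym by metis
    then show False using disj that by auto
  qed
  have fin: "finite Q" "finite Q'" unfolding Q_def Q'_def by auto
  have "Q \<noteq> {}" "Q' \<noteq> {}" using cQ cQ' h3 by auto
  have "{1..n} \<subseteq> Q"
    by (rule one_cycle_closed[OF one]) (use QQ \<open>Q \<noteq> {}\<close> clQ in auto)
  then have "Q' = {}" using disj QQ by auto
  then show False using \<open>Q' \<noteq> {}\<close> by simp
qed



definition va :: "nat \<Rightarrow> nat" where "va i = i + 1"
definition vb :: "nat \<Rightarrow> nat \<Rightarrow> nat" where "vb L i = L + 2 + i"

fun par :: "(nat \<Rightarrow> bool) \<Rightarrow> nat \<Rightarrow> bool" where
  "par y 0 = False"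
| "par y (Suc i) = (par y i \<noteq> y i)"

definition al :: "nat \<Rightarrow> (nat \<Rightarrow> bool) \<Rightarrow> nat \<Rightarrow> nat" where
  "al L y i = (if par y i then vb L i else va i)"
definition be :: "nat \<Rightarrow> (nat \<Rightarrow> bool) \<Rightarrow> nat \<Rightarrow> nat" where
  "be L y i = (if par y i then va i else vb L i)"
definition sg :: "nat \<Rightarrow> (nat \<Rightarrow> bool) \<Rightarrow> nat \<Rightarrow> nat" where
  "sg L y k = (if k \<le> L then al L y k else be L y (k - (L + 1)))"

definition Gs :: "nat \<Rightarrow> (nat \<Rightarrow> bool) \<Rightarrow> nat set set" where
  "Gs L y = {{al L y i, al L y (Suc i)} | i. i < L} \<union> {{be L y i, be L y (Suc i)} | i. i < L}
      \<union> {{va L, va 0}, {vb L L, vb L 0}}"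

definition gad :: "nat \<Rightarrow> bool \<Rightarrow> nat \<Rightarrow> nat set set" where
  "gad L c i = (if c then {{va i, vb L (Suc i)}, {vb L i, va (Suc i)}}
                else {{va i, va (Suc i)}, {vb L i, vb L (Suc i)}})"

lemma gad_eq: "{{al L y i, al L y (Suc i)}, {be L y i, be L y (Suc i)}} = gad L (y i) i"
  by (cases "par y i"; cases "y i") (auto simp: al_def be_def gad_def)

lemma Gs_local: "Gs L y = (\<Union>i<L. gad L (y i) i) \<union> {{va L, va 0}, {vb L L, vb L 0}}"
  unfolding Gs_def gad_eq[symmetric] by auto

definition lv :: "nat \<Rightarrow> nat \<Rightarrow> nat" where
  "lv L w = (if w \<le> L + 1 then w - 1 else w - (L + 2))"

lemma lvsum_gad: "M \<in> gad L c i \<Longrightarrow> i < L \<Longrightarrow> (\<Sum>w\<in>M. lv L w) = 2 * i + 1"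
proof -
  assume M: "M \<in> gad L c i" and i: "i < L"
  have "va i \<noteq> vb L (Suc i)" "vb L i \<noteq> va (Suc i)" "va i \<noteq> va (Suc i)" "vb L i \<noteq> vb L (Suc i)"
    using i by (simp_all add: va_def vb_def)
  moreover have "lv L (va i) = i" "lv L (va (Suc i)) = Suc i" "lv L (vb L i) = i" "lv L (vb L (Suc i)) = Suc i"
    using i by (auto simp: lv_def va_def vb_def)
  ultimately show ?thesis using M by (cases c) (auto simp: gad_def)
qed

lemma gad_unique: "M \<in> gad L c i \<Longrightarrow> M \<in> gad L c' i' \<Longrightarrow> i < L \<Longrightarrow> i' < L \<Longrightarrow> i = i'"
  using lvsum_gad[of M L c i] lvsum_gad[of M L c' i'] by simp

lemma Gs_dep: "\<exists>j<L. \<forall>y y'. y j = y' j \<longrightarrow> (M \<in> Gs L y) = (M \<in> Gs L y')" if "0 < L"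
proof (cases "\<exists>i<L. M \<in> gad L True i \<union> gad L False i")
  case True
  then obtain i0 where i0: "i0 < L" "M \<in> gad L True i0 \<union> gad L False i0" by blast
  have eq: "(M \<in> Gs L y) = (M \<in> gad L (y i0) i0 \<or> M \<in> {{va L, va 0}, {vb L L, vb L 0}})" for y
  proof -
    have "(\<exists>i<L. M \<in> gad L (y i) i) = (M \<in> gad L (y i0) i0)"
    proof
      assume "\<exists>i<L. M \<in> gad L (y i) i"
      then obtain i where i: "i < L" "M \<in> gad L (y i) i" by blast
      have "i = i0" using i i0 gad_unique by (cases "y i") blast+
      then show "M \<in> gad L (y i0) i0" using i by simp
    qed (use i0 in auto)
    then show ?thesis unfolding Gs_local by blast
  qed
  show ?thesis
  proof (intro exI[of _ i0] conjI allI impI)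
    fix y y' :: "nat \<Rightarrow> bool" assume "y i0 = y' i0"
    then show "(M \<in> Gs L y) = (M \<in> Gs L y')" unfolding eq by simp
  qed (rule i0(1))
next
  case False
  have "\<not> (\<exists>i<L. M \<in> gad L (y i) i)" for y
  proof
    assume "\<exists>i<L. M \<in> gad L (y i) i"
    then obtain i where "i < L" "M \<in> gad L (y i) i" by blast
    then show False using False by (cases "y i") auto
  qed
  then have "(M \<in> Gs L y) = (M \<in> {{va L, va 0}, {vb L L, vb L 0}})" for y
    unfolding Gs_local by blast
  then show ?thesis using that by (intro exI[of _ 0]) simp
qed

definition Pn :: "nat \<Rightarrow> nat \<Rightarrow> nat" where "Pn n i = (\<Sum>a\<in>{1..<i}. n - a)"

lemma Pn_Suc: "1 \<le> i \<Longrightarrow> Pn n (Suc i) = Pn n i + (n - i)"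
  unfolding Pn_def by (simp add: sum.atLeastLessThan_Suc)

lemma Pn_mono: "i \<le> i' \<Longrightarrow> Pn n i \<le> Pn n i'"
  unfolding Pn_def by (rule sum_mono2) auto

lemma pair_idx_bounds:
  assumes "1 \<le> i" "i < j" "j \<le> n"
  shows "Pn n i < pair_idx n i j" "pair_idx n i j \<le> Pn n (Suc i)"
proof -
  have "pair_idx n i j = Pn n i + (j - i)" by (simp add: pair_idx_def Pn_def)
  then show "Pn n i < pair_idx n i j" "pair_idx n i j \<le> Pn n (Suc i)"
    using assms by (auto simp: Pn_Suc)
qed

lemma pair_idx_inj:
  assumes "1 \<le> i" "i < j" "j \<le> n" "1 \<le> i'" "i' < j'" "j' \<le> n"
    and eq: "pair_idx n i j = pair_idx n i' j'"
  shows "i = i' \<and> j = j'"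
proof -
  have "\<not> i < i'" 
    if "1 \<le> i" "i < j" "j \<le> n" "1 \<le> i'" "i' < j'" "j' \<le> n" "pair_idx n i j = pair_idx n i' j'"
    for i i' j j' :: nat
  proof
    assume "i < i'"
    then have "Pn n (Suc i) \<le> Pn n i'" by (intro Pn_mono) simp
    then show False using pair_idx_bounds[OF that(1-3)] pair_idx_bounds[OF that(4-6)] that(7) by linarith
  qed
  then have "i = i'" using assms by (metis linorder_neqE_nat)
  then show ?thesis using eq assms by (simp add: pair_idx_def)
qed

definition Xin :: "nat \<Rightarrow> (nat \<Rightarrow> bool) \<Rightarrow> nat \<Rightarrow> bool" where
  "Xin L y idx = (\<exists>u v. 1 \<le> u \<and> u < v \<and> v \<le> 2 * L + 2 \<and> pair_idx (2 * L + 2) u v = idx \<and> {u, v} \<in> Gs L y)"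

lemma Xin_dep:
  assumes "0 < L"
  shows "\<exists>j<L. \<forall>y y'. y j = y' j \<longrightarrow> Xin L y idx = Xin L y' idx"
proof (cases "\<exists>u v. 1 \<le> u \<and> u < v \<and> v \<le> 2 * L + 2 \<and> pair_idx (2 * L + 2) u v = idx")
  case True
  then obtain u0 v0 where uv0: "1 \<le> u0" "u0 < v0" "v0 \<le> 2 * L + 2" "pair_idx (2 * L + 2) u0 v0 = idx"
    by blast
  have eq: "Xin L y idx = ({u0, v0} \<in> Gs L y)" for y
  proof
    assume "Xin L y idx"
    then obtain u v where uv: "1 \<le> u" "u < v" "v \<le> 2 * L + 2" "pair_idx (2 * L + 2) u v = idx" "{u, v} \<in> Gs L y"
      unfolding Xin_def by blast
    have "u = u0 \<and> v = v0" using pair_idx_inj[OF uv(1-3) uv0(1-3)] uv(4) uv0(4) by simp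
    then show "{u0, v0} \<in> Gs L y" using uv(5) by simp
  next
    assume "{u0, v0} \<in> Gs L y"
    then show "Xin L y idx" unfolding Xin_def using uv0 by blast
  qed
  obtain j where j: "j < L" "\<forall>y y'. y j = y' j \<longrightarrow> ({u0, v0} \<in> Gs L y) = ({u0, v0} \<in> Gs L y')"
    using Gs_dep[OF assms] by blast
  show ?thesis using j eq by metis
next
  case False
  then have "\<not> Xin L y idx" for y unfolding Xin_def by blast
  then show ?thesis using assms by blast
qed

lemma Xin_edge:
  assumes "u \<in> {1..2 * L + 2}" "v \<in> {1..2 * L + 2}"
  shows "edge (2 * L + 2) (Xin L y) u v \<longleftrightarrow> u \<noteq> v \<and> {u, v} \<in> Gs L y"
proof
  assume e: "edge (2 * L + 2) (Xin L y) u v"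
  then have ne: "u \<noteq> v" and x: "Xin L y (pair_idx (2 * L + 2) (min u v) (max u v))"
    unfolding edge_def by auto
  obtain u' v' where uv: "1 \<le> u'" "u' < v'" "v' \<le> 2 * L + 2"
      "pair_idx (2 * L + 2) u' v' = pair_idx (2 * L + 2) (min u v) (max u v)" "{u', v'} \<in> Gs L y"
    using x unfolding Xin_def by blast
  have m: "1 \<le> min u v" "min u v < max u v" "max u v \<le> 2 * L + 2" using assms ne by auto
  have "u' = min u v \<and> v' = max u v" using pair_idx_inj[OF uv(1-3) m] uv(4) by simp
  moreover have "{min u v, max u v} = {u, v}" by (auto simp: min_def max_def)
  ultimately show "u \<noteq> v \<and> {u, v} \<in> Gs L y" using ne uv(5) by simp
next
  assume a: "u \<noteq> v \<and> {u, v} \<in> Gs L y"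
  have m: "1 \<le> min u v" "min u v < max u v" "max u v \<le> 2 * L + 2" using assms a by auto
  have "{min u v, max u v} = {u, v}" by (auto simp: min_def max_def)
  then have "Xin L y (pair_idx (2 * L + 2) (min u v) (max u v))"
    unfolding Xin_def using m a by (intro exI[of _ "min u v"] exI[of _ "max u v"]) simp
  then show "edge (2 * L + 2) (Xin L y) u v" unfolding edge_def using a by simp
qed

lemma cyc_adj_iff: "cyc_adj N \<sigma> u v \<longleftrightarrow> {u, v} \<in> {{\<sigma> i, \<sigma> ((i + 1) mod N)} | i. i < N}"
  unfolding cyc_adj_def by (auto simp: doubleton_eq_iff)

lemma Gs_doubleton:
  assumes "M \<in> Gs L y" "0 < L"
  shows "\<exists>p q. p \<noteq> q \<and> M = {p, q}"
proof -
  have "M \<in> (\<Union>i<L. gad L (y i) i) \<or> M \<in> {{va L, va 0}, {vb L L, vb L 0}}"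
    using assms(1) unfolding Gs_local by blast
  then show ?thesis
  proof
    assume "M \<in> (\<Union>i<L. gad L (y i) i)"
    then obtain i where i: "i < L" "M \<in> gad L (y i) i" by blast
    have "va i \<noteq> vb L (Suc i)" "vb L i \<noteq> va (Suc i)" "va i \<noteq> va (Suc i)" "vb L i \<noteq> vb L (Suc i)"
      using i by (simp_all add: va_def vb_def)
    then show ?thesis using i by (cases "y i") (auto simp: gad_def)
  next
    assume "M \<in> {{va L, va 0}, {vb L L, vb L 0}}"
    moreover have "va L \<noteq> va 0" "vb L L \<noteq> vb L 0" using assms(2) by (simp_all add: va_def vb_def)
    ultimately show ?thesis by blast
  qed
qed

lemma al_be_ne: "0 < L \<Longrightarrow> al L y i \<noteq> be L y i"
  by (auto simp: al_def be_def va_def vb_def)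

lemma lv_al: "i \<le> L \<Longrightarrow> lv L (al L y i) = i"
  by (auto simp: al_def lv_def va_def vb_def)

lemma lv_be: "i \<le> L \<Longrightarrow> lv L (be L y i) = i"
  by (auto simp: be_def lv_def va_def vb_def)

lemma al_range: "i \<le> L \<Longrightarrow> al L y i \<in> {1..2 * L + 2}"
  by (auto simp: al_def va_def vb_def)

lemma be_range: "i \<le> L \<Longrightarrow> be L y i \<in> {1..2 * L + 2}"
  by (auto simp: be_def va_def vb_def)

lemma sg_lo: "k \<le> L \<Longrightarrow> sg L y k = al L y k"
  by (simp add: sg_def)

lemma sg_hi: "sg L y (L + 1 + t) = be L y t"
  by (simp add: sg_def)

lemma sg_bij:
  assumes "0 < L"
  shows "bij_betw (sg L y) {..<2 * L + 2} {1..2 * L + 2}"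
proof -
  have inj: "inj_on (sg L y) {..<2 * L + 2}"
  proof (rule inj_onI)
    fix k1 k2 assume k: "k1 \<in> {..<2 * L + 2}" "k2 \<in> {..<2 * L + 2}" and eq: "sg L y k1 = sg L y k2"
    have lvs: "lv L (sg L y k) = (if k \<le> L then k else k - (L + 1))" if "k < 2 * L + 2" for k
      using that by (auto simp: sg_def lv_al lv_be)
    have l: "(if k1 \<le> L then k1 else k1 - (L + 1)) = (if k2 \<le> L then k2 else k2 - (L + 1))"
      using lvs[of k1] lvs[of k2] k eq by simp
    show "k1 = k2"
    proof (cases "k1 \<le> L"; cases "k2 \<le> L")
      assume "k1 \<le> L" "\<not> k2 \<le> L"
      then have "sg L y k1 = al L y k1" "sg L y k2 = be L y k1" using l by (simp_all add: sg_def)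
      then show ?thesis using eq al_be_ne[OF assms] by metis
    next
      assume "\<not> k1 \<le> L" "k2 \<le> L"
      then have "sg L y k2 = al L y k2" "sg L y k1 = be L y k2" using l by (simp_all add: sg_def)
      then show ?thesis using eq al_be_ne[OF assms] by metis
    qed (use l in auto)
  qed
  have sub: "sg L y ` {..<2 * L + 2} \<subseteq> {1..2 * L + 2}"
  proof
    fix w assume "w \<in> sg L y ` {..<2 * L + 2}"
    then obtain k where k: "k < 2 * L + 2" "w = sg L y k" by auto
    show "w \<in> {1..2 * L + 2}"
    proof (cases "k \<le> L")
      case True then show ?thesis using k al_range by (simp add: sg_def)
    next
      case False then show ?thesis using k be_range[of "k - (L + 1)"] by (simp add: sg_def)
    qed
  qed
  have "card (sg L y ` {..<2 * L + 2}) = card {1..2 * L + 2}"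
    using card_image[OF inj] by simp
  then have "sg L y ` {..<2 * L + 2} = {1..2 * L + 2}"
    using card_subset_eq[OF _ sub] by simp
  then show ?thesis using inj by (simp add: bij_betw_def)
qed

lemma al_0: "al L y 0 = va 0" by (simp add: al_def)
lemma be_0: "be L y 0 = vb L 0" by (simp add: be_def)

lemma odd_set:
  assumes "par y L" "0 < L"
  shows "Gs L y = {{sg L y i, sg L y ((i + 1) mod (2 * L + 2))} | i. i < 2 * L + 2}"
proof
  have alL: "al L y L = vb L L" "be L y L = va L" using assms(1) by (simp_all add: al_def be_def)
  show "{{sg L y i, sg L y ((i + 1) mod (2 * L + 2))} | i. i < 2 * L + 2} \<subseteq> Gs L y"
  proof
    fix M assume "M \<in> {{sg L y i, sg L y ((i + 1) mod (2 * L + 2))} | i. i < 2 * L + 2}"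
    then obtain i where i: "i < 2 * L + 2" "M = {sg L y i, sg L y ((i + 1) mod (2 * L + 2))}" by blast
    consider "i < L" | "i = L" | "L < i \<and> i < 2 * L + 1" | "i = 2 * L + 1" using i(1) by linarith
    then show "M \<in> Gs L y"
    proof cases
      case 1
      then have "M = {al L y i, al L y (Suc i)}" using i by (simp add: sg_def)
      then show ?thesis using 1 unfolding Gs_def by blast
    next
      case 2
      then have "M = {vb L L, vb L 0}" using i alL by (simp add: sg_def be_0)
      then show ?thesis unfolding Gs_def by blast
    next
      case 3
      define t where "t = i - (L + 1)"
      have t: "i = L + 1 + t" "t < L" using 3 t_def by auto
      have "(i + 1) mod (2 * L + 2) = L + 1 + Suc t" using t by simp
      then have "M = {be L y t, be L y (Suc t)}" using i t sg_hi by metis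
      then show ?thesis using t unfolding Gs_def by blast
    next
      case 4
      then have "M = {va L, va 0}" using i alL sg_hi[of L y L] by (simp add: sg_def al_0)
      then show ?thesis unfolding Gs_def by blast
    qed
  qed
next
  have alL: "al L y L = vb L L" "be L y L = va L" using assms(1) by (simp_all add: al_def be_def)
  let ?C = "{{sg L y i, sg L y ((i + 1) mod (2 * L + 2))} | i. i < 2 * L + 2}"
  have c1: "{al L y i, al L y (Suc i)} \<in> ?C" if "i < L" for i
  proof -
    have "{al L y i, al L y (Suc i)} = {sg L y i, sg L y ((i + 1) mod (2 * L + 2))}"
      using that by (simp add: sg_def)
    then show ?thesis using that by force
  qed
  have c2: "{be L y i, be L y (Suc i)} \<in> ?C" if "i < L" for i
  proof -
    have m: "(L + 1 + i + 1) mod (2 * L + 2) = L + 1 + Suc i" using that by simp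
    have "{be L y i, be L y (Suc i)} = {sg L y (L + 1 + i), sg L y ((L + 1 + i + 1) mod (2 * L + 2))}"
      unfolding m sg_hi ..
    moreover have "L + 1 + i < 2 * L + 2" using that by simp
    ultimately show ?thesis by blast
  qed
  have c3: "{va L, va 0} \<in> ?C"
  proof -
    have "{va L, va 0} = {sg L y (2 * L + 1), sg L y ((2 * L + 1 + 1) mod (2 * L + 2))}"
      using alL sg_hi[of L y L] by (simp add: sg_def al_0)
    moreover have "2 * L + 1 < 2 * L + 2" by simp
    ultimately show ?thesis by blast
  qed
  have c4: "{vb L L, vb L 0} \<in> ?C"
  proof -
    have "{vb L L, vb L 0} = {sg L y L, sg L y ((L + 1) mod (2 * L + 2))}"
      using alL assms(2) sg_hi[of L y 0] by (simp add: sg_def be_0)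
    moreover have "L < 2 * L + 2" by simp
    ultimately show ?thesis by blast
  qed
  show "Gs L y \<subseteq> ?C" unfolding Gs_def using c1 c2 c3 c4 by blast
qed

lemma even_set:
  assumes "\<not> par y L" "0 < L"
  shows "Gs L y = {{sg L y i, sg L y ((i + 1) mod (L + 1))} | i. i < L + 1}
      \<union> {{sg L y (L + 1 + i), sg L y (L + 1 + (i + 1) mod (L + 1))} | i. i < L + 1}"
  (is "_ = ?C1 \<union> ?C2")
proof
  have alL: "al L y L = va L" "be L y L = vb L L" using assms(1) by (simp_all add: al_def be_def)
  show "?C1 \<union> ?C2 \<subseteq> Gs L y"
  proof
    fix M assume "M \<in> ?C1 \<union> ?C2"
    then show "M \<in> Gs L y"
    proof
      assume "M \<in> ?C1"
      then obtain i where i: "i < L + 1" "M = {sg L y i, sg L y ((i + 1) mod (L + 1))}" by blast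
      show ?thesis
      proof (cases "i < L")
        case True
        then have "M = {al L y i, al L y (Suc i)}" using i by (simp add: sg_def)
        then show ?thesis using True unfolding Gs_def by blast
      next
        case False
        then have "i = L" using i by simp
        then have "M = {va L, va 0}" using i alL by (simp add: sg_def al_0)
        then show ?thesis unfolding Gs_def by blast
      qed
    next
      assume "M \<in> ?C2"
      then obtain i where i: "i < L + 1" "M = {sg L y (L + 1 + i), sg L y (L + 1 + (i + 1) mod (L + 1))}" by blast
      then have M: "M = {be L y i, be L y ((i + 1) mod (L + 1))}" by (simp only: sg_hi)
      show ?thesis
      proof (cases "i < L")
        case True
        then have "M = {be L y i, be L y (Suc i)}" using M by simp
        then show ?thesis using True unfolding Gs_def by blast
      next
        case False
        then have "i = L" using i by simp
        then have "M = {vb L L, vb L 0}" using M alL by (simp add: be_0)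
        then show ?thesis unfolding Gs_def by blast
      qed
    qed
  qed
next
  have alL: "al L y L = va L" "be L y L = vb L L" using assms(1) by (simp_all add: al_def be_def)
  have c1: "{al L y i, al L y (Suc i)} \<in> ?C1" if "i < L" for i
  proof -
    have "{al L y i, al L y (Suc i)} = {sg L y i, sg L y ((i + 1) mod (L + 1))}"
      using that by (simp add: sg_def)
    then show ?thesis using that by force
  qed
  have c2: "{be L y i, be L y (Suc i)} \<in> ?C2" if "i < L" for i
  proof -
    have "{be L y i, be L y (Suc i)} = {sg L y (L + 1 + i), sg L y (L + 1 + (i + 1) mod (L + 1))}"
      using that by (simp only: sg_hi) simp
    then show ?thesis using that by force
  qed
  have c3: "{va L, va 0} \<in> ?C1"
  proof -
    have "{va L, va 0} = {sg L y L, sg L y ((L + 1) mod (L + 1))}"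
      using alL by (simp add: sg_def al_0)
    then show ?thesis by force
  qed
  have c4: "{vb L L, vb L 0} \<in> ?C2"
  proof -
    have "{vb L L, vb L 0} = {sg L y (L + 1 + L), sg L y (L + 1 + (L + 1) mod (L + 1))}"
      using alL by (simp only: sg_hi) (simp add: be_0)
    then show ?thesis by force
  qed
  show "Gs L y \<subseteq> ?C1 \<union> ?C2" unfolding Gs_def using c1 c2 c3 c4 by blast
qed

lemma doubleton_ne: "{u, v} = {p, q} \<Longrightarrow> p \<noteq> q \<Longrightarrow> u \<noteq> (v :: nat)"
  by auto

lemma X_one:
  assumes "2 \<le> L" "par y L"
  shows "one_cycle (2 * L + 2) (Xin L y)"
  unfolding one_cycle_def
proof (intro conjI exI[of _ "sg L y"] ballI)
  show "3 \<le> 2 * L + 2" using assms by simp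
  show "bij_betw (sg L y) {..<2 * L + 2} {1..2 * L + 2}" using sg_bij assms by simp
  fix u v assume uv: "u \<in> {1..2 * L + 2}" "v \<in> {1..2 * L + 2}"
  have "edge (2 * L + 2) (Xin L y) u v \<longleftrightarrow> {u, v} \<in> Gs L y"
    using Xin_edge[OF uv] Gs_doubleton[of "{u, v}" L y] assms(1) doubleton_ne by auto
  also have "\<dots> \<longleftrightarrow> cyc_adj (2 * L + 2) (sg L y) u v"
    unfolding cyc_adj_iff using odd_set[OF assms(2)] assms(1) by simp
  finally show "edge (2 * L + 2) (Xin L y) u v = cyc_adj (2 * L + 2) (sg L y) u v" .
qed

lemma X_two:
  assumes "2 \<le> L" "\<not> par y L"
  shows "two_cycles (2 * L + 2) (Xin L y)"
proof -
  have h: "(2 * L + 2) div 2 = L + 1" by simp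
  show ?thesis
    unfolding two_cycles_def h
  proof (intro conjI exI[of _ "sg L y"] ballI)
    show "even (2 * L + 2)" by simp
    show "3 \<le> L + 1" using assms by simp
    show "bij_betw (sg L y) {..<2 * L + 2} {1..2 * L + 2}" using sg_bij assms by simp
    fix u v assume uv: "u \<in> {1..2 * L + 2}" "v \<in> {1..2 * L + 2}"
    have "edge (2 * L + 2) (Xin L y) u v \<longleftrightarrow> {u, v} \<in> Gs L y"
      using Xin_edge[OF uv] Gs_doubleton[of "{u, v}" L y] assms(1) doubleton_ne by auto
    also have "\<dots> \<longleftrightarrow> cyc_adj (L + 1) (sg L y) u v \<or> cyc_adj (L + 1) (\<lambda>i. sg L y (L + 1 + i)) u v"
      unfolding cyc_adj_iff using even_set[OF assms(2)] assms(1) by simp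
    finally show "edge (2 * L + 2) (Xin L y) u v =
        (cyc_adj (L + 1) (sg L y) u v \<or> cyc_adj (L + 1) (\<lambda>i. sg L y (L + 1 + i)) u v)" .
  qed
qed

lemma par_card: "par y i = odd (card {j. j < i \<and> y j})"
proof (induction i)
  case 0
  then show ?case by simp
next
  case (Suc i)
  show ?case
  proof (cases "y i")
    case True
    have "{j. j < Suc i \<and> y j} = insert i {j. j < i \<and> y j}" using True by auto
    then show ?thesis using Suc True by simp
  next
    case False
    have "{j. j < Suc i \<and> y j} = {j. j < i \<and> y j}" using False less_Suc_eq by auto
    then show ?thesis using Suc False by simp
  qed
qed


lemma key_bound:
  fixes A :: "nat \<Rightarrow> 'm::finite \<Rightarrow> ('k, 'w) strategy"
  assumes L2: "2 \<le> L" and n: "n = 2 * L + 2"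
    and valid: "ampc_valid S n A R"
    and comp: "ampc_computes S n A R (Delta n) (one_v_two_cycle n)"
  shows "L \<le> (S * (S + 1)) ^ R"
proof (rule ccontr)
  assume "\<not> L \<le> (S * (S + 1)) ^ R"
  then have lt: "(S * (S + 1)) ^ R < L" by simp
  have L0: "0 < L" using L2 by simp
  define f where "f y = ind (dds_at S n A (Xin L y) R Answer = {#Bit True#})" for y
  have deg: "deg_le L ((S * (S + 1)) ^ R) f"
    unfolding f_def by (rule deg_dds[OF Xin_dep[OF L0] valid]) simp
  have fy: "f y = ind (par y L)" for y
  proof -
    have D: "Delta n (Xin L y)" and oc: "one_cycle n (Xin L y) = par y L"
    proof -
      show "Delta n (Xin L y)"
      proof (cases "par y L")
        case True then show ?thesis using X_one[OF L2] n by (simp add: Delta_def)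
      next
        case False then show ?thesis using X_two[OF L2] n by (simp add: Delta_def)
      qed
      show "one_cycle n (Xin L y) = par y L"
      proof (cases "par y L")
        case True then show ?thesis using X_one[OF L2] n by simp
      next
        case False then show ?thesis using X_two[OF L2] two_not_one n by metis
      qed
    qed
    have "dds_at S n A (Xin L y) R = (\<lambda>k. if k = Answer then {#Bit (one_v_two_cycle n (Xin L y))#} else {#})"
      using comp D unfolding ampc_computes_def by blast
    then show ?thesis unfolding f_def using oc by (simp add: one_v_two_cycle_def ind_def)
  qed
  have "(\<Sum>T\<in>Pow {..<L}. (-1::real) ^ card T * f (\<lambda>i. i \<in> T)) = 0"
    by (rule deg_le_alt_sum[OF deg lt])
  moreover have "(\<Sum>T\<in>Pow {..<L}. (-1::real) ^ card T * f (\<lambda>i. i \<in> T)) = (\<Sum>T\<in>Pow {..<L}. - ind (odd (card T)))"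
  proof (rule sum.cong)
    fix T assume T: "T \<in> Pow {..<L}"
    then have "{j. j < L \<and> j \<in> T} = T" by auto
    then have "par (\<lambda>i. i \<in> T) L = odd (card T)" by (simp add: par_card)
    then show "(-1::real) ^ card T * f (\<lambda>i. i \<in> T) = - ind (odd (card T))"
      by (simp add: fy ind_def)
  qed simp
  moreover have "(\<Sum>T\<in>Pow {..<L}. - ind (odd (card T))) < 0"
  proof -
    have mem: "{0} \<in> Pow {..<L}" using L0 by simp
    have "(\<Sum>T\<in>Pow {..<L}. - ind (odd (card T))) = - ind (odd (card {0::nat})) + (\<Sum>T\<in>Pow {..<L} - {{0}}. - ind (odd (card T)))"
      by (rule sum.remove[OF _ mem]) simp
    moreover have "(\<Sum>T\<in>Pow {..<L} - {{0}}. - ind (odd (card T))) \<le> 0"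
      by (rule sum_nonpos) (simp add: ind_def)
    ultimately show ?thesis by (simp add: ind_def)
  qed
  ultimately show False by simp
qed

theorem theorem4p7:
  fixes n S R :: nat
    and A :: "nat \<Rightarrow> 'm::finite \<Rightarrow> ('k, 'w) strategy"
  assumes "even n"
    and "S \<ge> 2"
    and "ampc_valid S n A R"
    and "ampc_computes S n A R (Delta n) (one_v_two_cycle n)"
  shows "real R \<ge> log (real S) (real n) / 3 - log (real S) 32 / 3"
proof -
  have S1: "1 < real S" using assms(2) by simp
  have bound: "real n \<le> 32 * real S ^ (3 * R)"
  proof (cases "n < 6")
    case True
    have "1 \<le> real S ^ (3 * R)" using S1 by simp
    then show ?thesis using True by simp
  next
    case False
    define L where "L = n div 2 - 1"
    have L2: "2 \<le> L" and n: "n = 2 * L + 2" using False assms(1) unfolding L_def by auto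
    have kb: "L \<le> (S * (S + 1)) ^ R" by (rule key_bound[OF L2 n assms(3,4)])
    have "2 * S \<le> S * S" using assms(2) by (rule mult_le_mono1)
    then have "S + 1 \<le> S * S" using assms(2) by linarith
    then have "S * (S + 1) \<le> S * (S * S)" by (rule mult_le_mono2)
    then have "S * (S + 1) \<le> S ^ 3" by (simp add: power3_eq_cube mult.assoc)
    then have "(S * (S + 1)) ^ R \<le> (S ^ 3) ^ R" by (rule power_mono) simp
    then have "L \<le> S ^ (3 * R)" using kb by (simp add: power_mult)
    moreover have "1 \<le> S ^ (3 * R)" using assms(2) by simp
    ultimately have "n \<le> 32 * S ^ (3 * R)" using n by linarith
    then have "real n \<le> real (32 * S ^ (3 * R))" by (simp only: of_nat_le_iff)
    then show ?thesis by simp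
  qed
  show ?thesis
  proof (cases "n = 0")
    case True
    have "0 \<le> log (real S) 32" using S1 by simp
    moreover have "log (real S) (real n) = 0" using True by (simp add: log_def)
    ultimately show ?thesis by simp
  next
    case False
    then have "log (real S) (real n) \<le> log (real S) (32 * real S ^ (3 * R))"
      using bound S1 by simp
    also have "\<dots> = log (real S) 32 + real (3 * R)"
      using S1 by (simp add: log_mult log_nat_power)
    finally show ?thesis by simp
  qed
qed

end
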